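(* Suppose $K$ and $t=KM/N$ are both even, with $2\le t\le K$. Then the D2D coded caching rate $R=N/M-1$ is achievable with some subpacketization $F$ satisfying $F\le \tfrac12 F_{\rm JCM}$.
   Context: D2D coded caching setting: there are $N\ge 1$ files $W_1,\dots,W_N$ and $K\ge 2$ users, each with a cache of size $M$ files, $0<M\le N$, and $t:=KM/N$ is assumed to be a positive integer. A D2D coded caching scheme with (uncoded placement and) subpacketization $F\in\mathbb{N}_+$ is defined as follows. Fix a packet size $b\ge 1$; each file is a sequence of $F$ packets $W_n=(W_n^{(1)},\dots,W_n^{(F)})$, $W_n^{(j)}\in\{0,1\}^b$. Placement: each user $k\in[K]$ stores the packets $\{W_n^{(j)}:(n,j)\in Z_k\}$ for a fixed index set $Z_k\subseteq[N]\times[F]$ with $|Z_k|\le MF$ (independent of demands and file contents). Delivery: for every demand vector $\mathbf d=(d_1,\dots,d_K)\in[N]^K$, each user $k$ broadcasts to all other users $\ell_k(\mathbf d)\in\mathbb{N}$ blocks in $\{0,1\}^b$, each a deterministic function of the packets stored by user $k$; it is required that for all file contents each user $k$ can recover all $F$ packets of $W_{d_k}$ from its stored packets and the blocks sent by the other users. The rate is $R=\max_{\mathbf d}\frac{1}{F}\sum_{k=1}^K\ell_k(\mathbf d)$ (transmitted bits normalized by the file size $Fb$). The rate $R$ is achievable with subpacketization $F$ if such a scheme with rate $R$ exists for every packet size $b\ge 1$. Define $F_{\rm JCM}:=t\binom{K}{t}$. *)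

theory Defs
  imports Complex_Main "HOL-Library.FuncSet"
begin

text \<open>A packet index is a pair (n, j) with n the file and j the packet number.\<close>

definition demands :: "nat \<Rightarrow> nat \<Rightarrow> (nat \<Rightarrow> nat) set" where
  "demands N K = ({1..K} \<rightarrow>\<^sub>E {1..N})"

definition contents :: "nat \<Rightarrow> nat \<Rightarrow> nat \<Rightarrow> (nat \<times> nat \<Rightarrow> bool list) set" where
  "contents N F b = {W. \<forall>n\<in>{1..N}. \<forall>j\<in>{1..F}. length (W (n, j)) = b}"

text \<open>Z k : cached index set of user k.  l k d : number of blocks broadcast by user k for demand d.
  enc k d : encoding map of user k, applied to the stored packets (the content restricted to Z k).
  dec k d : decoding map of user k, from its stored packets and the blocks sent by the other users
  to the packets (indexed by j) of the requested file.\<close>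

definition d2d_scheme ::
  "nat \<Rightarrow> nat \<Rightarrow> real \<Rightarrow> nat \<Rightarrow> nat \<Rightarrow> (nat \<Rightarrow> (nat \<times> nat) set) \<Rightarrow> (nat \<Rightarrow> (nat \<Rightarrow> nat) \<Rightarrow> nat)
   \<Rightarrow> (nat \<Rightarrow> (nat \<Rightarrow> nat) \<Rightarrow> (nat \<times> nat \<Rightarrow> bool list) \<Rightarrow> bool list list)
   \<Rightarrow> (nat \<Rightarrow> (nat \<Rightarrow> nat) \<Rightarrow> (nat \<times> nat \<Rightarrow> bool list) \<Rightarrow> (nat \<Rightarrow> bool list list) \<Rightarrow> nat \<Rightarrow> bool list)
   \<Rightarrow> bool" where
  "d2d_scheme N K M F b Z l enc dec \<longleftrightarrow>
     (\<forall>k\<in>{1..K}. Z k \<subseteq> {1..N} \<times> {1..F} \<and> real (card (Z k)) \<le> M * real F) \<and>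
     (\<forall>d\<in>demands N K. \<forall>W\<in>contents N F b.
        (\<forall>k\<in>{1..K}. length (enc k d (restrict W (Z k))) = l k d \<and>
                    (\<forall>x\<in>set (enc k d (restrict W (Z k))). length x = b)) \<and>
        (\<forall>k\<in>{1..K}. \<forall>j\<in>{1..F}.
           dec k d (restrict W (Z k))
               (\<lambda>k'. if k' \<in> {1..K} - {k} then enc k' d (restrict W (Z k')) else [])
               j = W (d k, j)))"

definition d2d_rate :: "nat \<Rightarrow> nat \<Rightarrow> nat \<Rightarrow> (nat \<Rightarrow> (nat \<Rightarrow> nat) \<Rightarrow> nat) \<Rightarrow> real" where
  "d2d_rate N K F l = Max ((\<lambda>d. real (\<Sum>k\<in>{1..K}. l k d) / real F) ` demands N K)"

definition d2d_achievable :: "nat \<Rightarrow> nat \<Rightarrow> real \<Rightarrow> nat \<Rightarrow> real \<Rightarrow> bool" where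
  "d2d_achievable N K M F R \<longleftrightarrow>
     (\<forall>b\<ge>1. \<exists>Z l enc dec. d2d_scheme N K M F b Z l enc dec \<and> d2d_rate N K F l = R)"

end

theory Submission
  imports Defs
begin

locale sch = fixes K t :: nat assumes eK: "even K" and et: "even t" and t2: "2 \<le> t" and tK: "t \<le> K"
begin
definition h where "h = K div 2"
definition hA where "hA = {1..h}"
definition hB where "hB = {h+1..K}"
definition wt where "wt T = min (card (T \<inter> hA)) (card (T \<inter> hB))"
definition side where "side S = (if card (S \<inter> hA) < card (S \<inter> hB) then hA else hB)"
definition Ts where "Ts m = {T. T \<subseteq> {1..K} \<and> card T = m}"
definition Pc where "Pc = Sigma (Ts t) (\<lambda>T. {..<wt T})"
definition pl where "pl = (SOME xs. set xs = Pc \<and> distinct xs)"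
definition FF where "FF = length pl"
definition pnum where "pnum x = Suc (THE j. j < FF \<and> pl ! j = x)"
definition rk :: "nat \<Rightarrow> nat set \<Rightarrow> nat" where "rk s Y = card {y\<in>Y. y < s}"
definition snd_sets where "snd_sets s = {S \<in> Ts (Suc t). s \<in> S \<and> s \<in> side S}"
definition sl where "sl s = (SOME xs. set xs = snd_sets s \<and> distinct xs)"

lemma fin_Ts: "finite (Ts m)"
proof -
  have "Ts m \<subseteq> Pow {1..K}" unfolding Ts_def by auto
  thus ?thesis by (rule finite_subset) auto
qed

lemma fin_Pc: "finite Pc"
  unfolding Pc_def using fin_Ts by auto

lemma pl_props: "set pl = Pc" "distinct pl"
proof -
  have "\<exists>xs. set xs = Pc \<and> distinct xs" using finite_distinct_list[OF fin_Pc] by blast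
  hence "set pl = Pc \<and> distinct pl" unfolding pl_def by (rule someI_ex)
  thus "set pl = Pc" "distinct pl" by auto
qed

lemma FF_card: "FF = card Pc"
  unfolding FF_def using distinct_card[OF pl_props(2)] pl_props(1) by simp

lemma sl_props: "set (sl s) = snd_sets s" "distinct (sl s)"
proof -
  have "finite (snd_sets s)" unfolding snd_sets_def using fin_Ts by auto
  hence "\<exists>xs. set xs = snd_sets s \<and> distinct xs" using finite_distinct_list by blast
  hence "set (sl s) = snd_sets s \<and> distinct (sl s)" unfolding sl_def by (rule someI_ex)
  thus "set (sl s) = snd_sets s" "distinct (sl s)" by auto
qed

lemma pl_in: "j \<in> {1..FF} \<Longrightarrow> pl ! (j-1) \<in> Pc"
proof -
  assume "j \<in> {1..FF}"
  hence "j - 1 < length pl" unfolding FF_def by auto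
  thus ?thesis using nth_mem pl_props(1) by blast
qed

lemma pnum_props: assumes "x \<in> Pc" shows "pnum x \<in> {1..FF}" "pl ! (pnum x - 1) = x"
proof -
  have ex: "\<exists>!j. j < length pl \<and> pl ! j = x" using distinct_Ex1[OF pl_props(2), of x] pl_props(1) assms by simp
  hence th: "(THE j. j < FF \<and> pl ! j = x) < FF \<and> pl ! (THE j. j < FF \<and> pl ! j = x) = x"
    unfolding FF_def by (rule theI')
  thus "pnum x \<in> {1..FF}" "pl ! (pnum x - 1) = x" unfolding pnum_def by auto
qed

lemma pnum_inv: assumes "j \<in> {1..FF}" shows "pnum (pl ! (j-1)) = j"
proof -
  have ex: "\<exists>!q. q < length pl \<and> pl ! q = pl ! (j-1)" using distinct_Ex1[OF pl_props(2), of "pl ! (j-1)"] pl_props(1) pl_in[OF assms] by simp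
  have "j - 1 < FF" using assms by auto
  hence "(THE q. q < FF \<and> pl ! q = pl ! (j-1)) = j - 1"
    using ex unfolding FF_def by (intro the1_equality) auto
  thus ?thesis unfolding pnum_def using assms by auto
qed

lemma rk_less: assumes "finite Y" "s \<in> Y" shows "rk s Y < card Y"
  unfolding rk_def using assms by (intro psubset_card_mono) auto

lemma rk_inj: assumes "finite Y" shows "inj_on (\<lambda>s. rk s Y) Y"
proof
  fix x y assume xy: "x \<in> Y" "y \<in> Y" "rk x Y = rk y Y"
  show "x = y"
  proof (rule ccontr)
    assume "x \<noteq> y"
    then consider "x < y" | "y < x" by linarith
    thus False
    proof cases
      case 1
      have "rk x Y < rk y Y" unfolding rk_def using assms xy 1 by (intro psubset_card_mono) auto
      thus False using xy by simp
    next
      case 2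
      have "rk y Y < rk x Y" unfolding rk_def using assms xy 2 by (intro psubset_card_mono) auto
      thus False using xy by simp
    qed
  qed
qed

lemma rk_surj: assumes "finite Y" "i < card Y" shows "\<exists>!s. s \<in> Y \<and> rk s Y = i"
proof -
  have sub: "(\<lambda>s. rk s Y) ` Y \<subseteq> {..<card Y}" using rk_less assms by auto
  have "card ((\<lambda>s. rk s Y) ` Y) = card Y" using card_image rk_inj assms by blast
  hence "(\<lambda>s. rk s Y) ` Y = {..<card Y}" using sub by (intro card_subset_eq) auto
  hence "\<exists>s. s \<in> Y \<and> rk s Y = i" using assms by (metis imageE lessThan_iff)
  thus ?thesis using rk_inj[OF assms(1)] unfolding inj_on_def by blast
qed

lemma K_h: "K = 2 * h" "1 \<le> h" using eK t2 tK unfolding h_def by auto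

lemma AB_un: "hA \<union> hB = {1..K}" unfolding hA_def hB_def using K_h by auto
lemma AB_dis: "hA \<inter> hB = {}" unfolding hA_def hB_def by auto
lemma fin_AB: "finite hA" "finite hB" unfolding hA_def hB_def by auto

lemma card_split: assumes "S \<subseteq> {1..K}" shows "card S = card (S \<inter> hA) + card (S \<inter> hB)"
proof -
  have "S = (S \<inter> hA) \<union> (S \<inter> hB)" using assms AB_un by auto
  moreover have "finite S" using assms finite_subset by blast
  moreover have "(S \<inter> hA) \<inter> (S \<inter> hB) = {}" using AB_dis by auto
  ultimately show ?thesis using card_Un_disjoint[of "S \<inter> hA" "S \<inter> hB"] by (metis finite_Int)
qed

lemma C1: assumes S: "S \<subseteq> {1..K}" "odd (card S)" and k: "k \<in> S"
  shows "card (side S \<inter> S - {k}) = wt (S - {k})"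
proof -
  define a where "a = card (S \<inter> hA)"
  define b where "b = card (S \<inter> hB)"
  have ab: "card S = a + b" using card_split[OF S(1)] a_def b_def by simp
  have fS: "finite S" using S(1) finite_subset by blast
  have d1: "(S - {k}) \<inter> hA = S \<inter> hA - {k}" "(S - {k}) \<inter> hB = S \<inter> hB - {k}" by auto
  have kAB: "k \<in> hA \<or> k \<in> hB" using k S(1) AB_un by auto
  have cA: "card (S \<inter> hA - {k}) = (if k \<in> hA then a - 1 else a)"
    using k fS unfolding a_def by (simp add: card_Diff_singleton_if)
  have cB: "card (S \<inter> hB - {k}) = (if k \<in> hB then b - 1 else b)"
    using k fS unfolding b_def by (simp add: card_Diff_singleton_if)
  have kn: "\<not> (k \<in> hA \<and> k \<in> hB)" using AB_dis by auto
  have a0: "k \<in> hA \<Longrightarrow> a \<ge> 1"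
  proof -
    assume "k \<in> hA" hence "S \<inter> hA \<noteq> {}" using k by auto
    hence "card (S \<inter> hA) > 0" using fS by (simp add: card_gt_0_iff)
    thus ?thesis unfolding a_def by simp
  qed
  have b0: "k \<in> hB \<Longrightarrow> b \<ge> 1"
  proof -
    assume "k \<in> hB" hence "S \<inter> hB \<noteq> {}" using k by auto
    hence "card (S \<inter> hB) > 0" using fS by (simp add: card_gt_0_iff)
    thus ?thesis unfolding b_def by simp
  qed
  have "a \<noteq> b" using S(2) ab by auto
  then consider "a < b" | "b < a" by linarith
  thus ?thesis
  proof cases
    case 1
    hence sd: "side S = hA" unfolding side_def a_def b_def by simp
    have e: "side S \<inter> S - {k} = S \<inter> hA - {k}" using sd by auto
    show ?thesis
    proof (cases "k \<in> hA")
      case True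
      hence "k \<notin> hB" using kn by blast
      hence "card (S \<inter> hA - {k}) = a - 1" "card (S \<inter> hB - {k}) = b" using cA cB True by auto
      thus ?thesis unfolding wt_def d1 e using 1 by simp
    next
      case False
      hence "k \<in> hB" using kAB by blast
      hence "card (S \<inter> hA - {k}) = a" "card (S \<inter> hB - {k}) = b - 1" using cA cB False by auto
      thus ?thesis unfolding wt_def d1 e using 1 by simp
    qed
  next
    case 2
    hence sd: "side S = hB" unfolding side_def a_def b_def by simp
    have e: "side S \<inter> S - {k} = S \<inter> hB - {k}" using sd by auto
    show ?thesis
    proof (cases "k \<in> hA")
      case True
      hence "k \<notin> hB" using kn by blast
      hence "card (S \<inter> hA - {k}) = a - 1" "card (S \<inter> hB - {k}) = b" using cA cB True by auto
      thus ?thesis unfolding wt_def d1 e using 2 by simp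
    next
      case False
      hence "k \<in> hB" using kAB by blast
      hence "card (S \<inter> hA - {k}) = a" "card (S \<inter> hB - {k}) = b - 1" using cA cB False by auto
      thus ?thesis unfolding wt_def d1 e using 2 b0 \<open>k \<in> hB\<close> by simp
    qed
  qed
qed

lemma sum_card_Y: assumes "finite S" "Y \<subseteq> S"
  shows "(\<Sum>k\<in>S. card (Y - {k})) = card Y * (card S - 1)"
proof -
  have fY: "finite Y" using assms finite_subset by blast
  have "(\<Sum>k\<in>S. card (Y - {k})) = (\<Sum>k\<in>S. if k \<in> Y then card Y - 1 else card Y)"
    using fY by (intro sum.cong) (auto simp: card_Diff_singleton_if)
  also have "\<dots> = (\<Sum>k\<in>Y. card Y - 1) + (\<Sum>k\<in>S - Y. card Y)"
  proof -
    have "S \<inter> {x. x \<in> Y} = Y" "S \<inter> - {x. x \<in> Y} = S - Y" using assms(2) by auto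
    thus ?thesis by (subst sum.If_cases[OF assms(1)]) simp
  qed
  also have "\<dots> = card Y * (card Y - 1) + (card S - card Y) * card Y"
    using assms fY by (simp add: card_Diff_subset)
  also have "\<dots> = card Y * (card S - 1)"
  proof -
    have "card Y \<le> card S" using assms card_mono by blast
    then obtain r where r: "card S = card Y + r" using le_Suc_ex by blast
    show ?thesis
    proof (cases "card Y")
      case 0 thus ?thesis by simp
    next
      case (Suc y)
      thus ?thesis unfolding r by (simp add: algebra_simps)
    qed
  qed
  finally show ?thesis .
qed

lemma items_S: assumes "S \<in> Ts (Suc t)"
  shows "(\<Sum>k\<in>S. wt (S - {k})) = t * card (side S \<inter> S)"
proof -
  have S: "S \<subseteq> {1..K}" "card S = Suc t" using assms unfolding Ts_def by auto
  have fS: "finite S" using S(1) finite_subset by blast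
  have od: "odd (card S)" using S(2) et by simp
  have "(\<Sum>k\<in>S. wt (S - {k})) = (\<Sum>k\<in>S. card (side S \<inter> S - {k}))"
    using C1[OF S(1) od] by simp
  also have "\<dots> = card (side S \<inter> S) * (card S - 1)" by (rule sum_card_Y[OF fS]) auto
  finally show ?thesis using S(2) by simp
qed

lemma card_Pc: "card Pc = (\<Sum>T\<in>Ts t. wt T)"
  unfolding Pc_def using fin_Ts by (subst card_SigmaI) auto

lemma reindex: "(\<Sum>S\<in>Ts (Suc t). \<Sum>k\<in>S. g (S - {k})) = (\<Sum>T\<in>Ts t. (K - t) * g T)"
proof -
  have fT: "\<And>m. finite (Ts m)" by (rule fin_Ts)
  have fin1: "\<forall>S\<in>Ts (Suc t). finite S" unfolding Ts_def using finite_subset by blast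
  have "(\<Sum>S\<in>Ts (Suc t). \<Sum>k\<in>S. g (S - {k})) = (\<Sum>p\<in>Sigma (Ts (Suc t)) (\<lambda>S. S). g (fst p - {snd p}))"
    using fin1 fT by (subst sum.Sigma) (auto simp: split_def)
  also have "\<dots> = (\<Sum>q\<in>Sigma (Ts t) (\<lambda>T. {1..K} - T). g (fst q))"
  proof (rule sum.reindex_bij_witness[where i = "\<lambda>(T,k). (insert k T, k)" and j = "\<lambda>(S,k). (S - {k}, k)"])
    fix a assume "a \<in> Sigma (Ts (Suc t)) (\<lambda>S. S)"
    thus "(case case a of (S, k) \<Rightarrow> (S - {k}, k) of (T, k) \<Rightarrow> (insert k T, k)) = a" by auto
  next
    fix a assume a: "a \<in> Sigma (Ts (Suc t)) (\<lambda>S. S)"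
    then obtain S k where "a = (S,k)" "S \<in> Ts (Suc t)" "k \<in> S" by auto
    moreover hence "finite S" unfolding Ts_def using finite_subset by blast
    ultimately show "(case a of (S, k) \<Rightarrow> (S - {k}, k)) \<in> Sigma (Ts t) (\<lambda>T. {1..K} - T)"
      unfolding Ts_def by auto
  next
    fix b assume "b \<in> Sigma (Ts t) (\<lambda>T. {1..K} - T)"
    thus "(case case b of (T, k) \<Rightarrow> (insert k T, k) of (S, k) \<Rightarrow> (S - {k}, k)) = b" by auto
  next
    fix b assume "b \<in> Sigma (Ts t) (\<lambda>T. {1..K} - T)"
    then obtain T k where "b = (T,k)" "T \<in> Ts t" "k \<in> {1..K} - T" by auto
    moreover hence "finite T" unfolding Ts_def using finite_subset by blast
    ultimately show "(case b of (T, k) \<Rightarrow> (insert k T, k)) \<in> Sigma (Ts (Suc t)) (\<lambda>S. S)"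
      unfolding Ts_def by auto
  next
    fix a assume "a \<in> Sigma (Ts (Suc t)) (\<lambda>S. S)"
    thus "g (fst (case a of (S, k) \<Rightarrow> (S - {k}, k))) = g (fst a - {snd a})" by auto
  qed
  also have "\<dots> = (\<Sum>T\<in>Ts t. \<Sum>k\<in>{1..K} - T. g T)"
    using fT by (subst sum.Sigma) (auto simp: split_def)
  also have "\<dots> = (\<Sum>T\<in>Ts t. (K - t) * g T)"
  proof (rule sum.cong)
    fix T assume "T \<in> Ts t"
    hence "T \<subseteq> {1..K}" "card T = t" unfolding Ts_def by auto
    hence "card ({1..K} - T) = K - t" by (simp add: card_Diff_subset finite_subset)
    thus "(\<Sum>k\<in>{1..K} - T. g T) = (K - t) * g T" by simp
  qed simp
  finally show ?thesis .
qed

lemma rate_count: "t * (\<Sum>S\<in>Ts (Suc t). card (side S \<inter> S)) = (K - t) * card Pc"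
proof -
  have "t * (\<Sum>S\<in>Ts (Suc t). card (side S \<inter> S)) = (\<Sum>S\<in>Ts (Suc t). \<Sum>k\<in>S. wt (S - {k}))"
    using items_S by (simp add: sum_distrib_left)
  also have "\<dots> = (\<Sum>T\<in>Ts t. (K - t) * wt T)" by (rule reindex)
  also have "\<dots> = (K - t) * card Pc" unfolding card_Pc by (simp add: sum_distrib_left)
  finally show ?thesis .
qed

lemma send_count: "(\<Sum>k\<in>{1..K}. card (snd_sets k)) = (\<Sum>S\<in>Ts (Suc t). card (side S \<inter> S))"
proof -
  have "(\<Sum>k\<in>{1..K}. card (snd_sets k)) = (\<Sum>k\<in>{1..K}. \<Sum>S\<in>Ts (Suc t). if k \<in> S \<and> k \<in> side S then 1 else 0)"
    unfolding snd_sets_def using fin_Ts by (simp add: sum.If_cases Int_def)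
  also have "\<dots> = (\<Sum>S\<in>Ts (Suc t). \<Sum>k\<in>{1..K}. if k \<in> S \<and> k \<in> side S then 1 else 0)"
    by (rule sum.swap)
  also have "\<dots> = (\<Sum>S\<in>Ts (Suc t). card (side S \<inter> S))"
  proof (rule sum.cong)
    fix S assume "S \<in> Ts (Suc t)"
    hence "S \<subseteq> {1..K}" unfolding Ts_def by auto
    hence "{1..K} \<inter> {k. k \<in> S \<and> k \<in> side S} = side S \<inter> S" by auto
    thus "(\<Sum>k\<in>{1..K}. if k \<in> S \<and> k \<in> side S then 1 else 0) = card (side S \<inter> S)"
      by (simp add: sum.If_cases)
  qed simp
  finally show ?thesis .
qed

definition cnt where "cnt k = card {x\<in>Pc. k \<in> fst x}"

lemma wt_perm: assumes X: "\<And>x. \<pi> x \<in> hA \<longleftrightarrow> x \<in> X" and Y: "\<And>x. \<pi> x \<in> hB \<longleftrightarrow> x \<in> Y"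
  and XY: "(X = hA \<and> Y = hB) \<or> (X = hB \<and> Y = hA)" and inj: "inj \<pi>"
  shows "wt (\<pi> ` T) = wt T"
proof -
  have 1: "\<pi> ` T \<inter> hA = \<pi> ` (T \<inter> X)" using X by auto
  have 2: "\<pi> ` T \<inter> hB = \<pi> ` (T \<inter> Y)" using Y by auto
  have "card (\<pi> ` T \<inter> hA) = card (T \<inter> X)" unfolding 1 using inj by (simp add: card_image inj_on_subset)
  moreover have "card (\<pi> ` T \<inter> hB) = card (T \<inter> Y)" unfolding 2 using inj by (simp add: card_image inj_on_subset)
  ultimately show ?thesis unfolding wt_def using XY by auto
qed

lemma inv_cnt: assumes inv: "\<And>i. \<pi> (\<pi> i) = i" and pK: "\<And>i. i \<in> {1..K} \<Longrightarrow> \<pi> i \<in> {1..K}"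
  and pw: "\<And>T. wt (\<pi> ` T) = wt T"
  shows "cnt (\<pi> k) = cnt k"
proof -
  have inj: "inj \<pi>" by (rule injI) (metis inv)
  have ii: "\<And>T. \<pi> ` (\<pi> ` T) = T" using inv by (simp add: image_image)
  have cT: "\<And>T. card (\<pi> ` T) = card T" using inj by (simp add: card_image inj_on_subset)
  have sub: "\<And>T. T \<subseteq> {1..K} \<Longrightarrow> \<pi> ` T \<subseteq> {1..K}" using pK by auto
  have PcI: "\<And>T i. (T, i) \<in> Pc \<Longrightarrow> (\<pi> ` T, i) \<in> Pc"
  proof -
    fix T i assume "(T, i) \<in> Pc"
    hence "T \<subseteq> {1..K}" "card T = t" "i < wt T" unfolding Pc_def Ts_def by auto
    thus "(\<pi> ` T, i) \<in> Pc" unfolding Pc_def Ts_def using sub cT pw by simp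
  qed
  have mem: "\<And>T. (k \<in> T) = (\<pi> k \<in> \<pi> ` T)" using inj by (simp add: inj_image_mem_iff)
  have mem2: "\<And>T. (\<pi> k \<in> T) = (k \<in> \<pi> ` T)" using mem ii by metis
  define f where "f = (\<lambda>(T::nat set, i::nat). (\<pi> ` T, i))"
  have ff: "\<And>x. f (f x) = x" unfolding f_def using ii by (auto simp: split_def)
  have fm: "\<And>x. x \<in> Pc \<Longrightarrow> f x \<in> Pc" unfolding f_def using PcI by (auto simp: split_def)
  have f1: "\<And>x. fst (f x) = \<pi> ` fst x" unfolding f_def by (simp add: split_def)
  have "bij_betw f {x\<in>Pc. k \<in> fst x} {x\<in>Pc. \<pi> k \<in> fst x}"
  proof (rule bij_betw_byWitness[where f' = f])
    show "\<forall>a\<in>{x \<in> Pc. k \<in> fst x}. f (f a) = a" using ff by simp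
    show "\<forall>a\<in>{x \<in> Pc. \<pi> k \<in> fst x}. f (f a) = a" using ff by simp
    show "f ` {x \<in> Pc. k \<in> fst x} \<subseteq> {x \<in> Pc. \<pi> k \<in> fst x}"
      using fm f1 mem by blast
    show "f ` {x \<in> Pc. \<pi> k \<in> fst x} \<subseteq> {x \<in> Pc. k \<in> fst x}"
      using fm f1 mem2 by blast
  qed
  thus ?thesis unfolding cnt_def by (simp add: bij_betw_same_card)
qed

definition tau :: "nat \<Rightarrow> nat \<Rightarrow> nat \<Rightarrow> nat" where "tau a c i = (if i = a then c else if i = c then a else i)"
definition sig :: "nat \<Rightarrow> nat" where "sig i = (if i \<in> hA then i + h else if i \<in> hB then i - h else i)"

lemma tau_props: "tau a c (tau a c i) = i" "inj (tau a c)"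
  unfolding tau_def inj_def by auto

lemma sig_A: "i \<in> hA \<Longrightarrow> i + h \<in> hB" unfolding hA_def hB_def using K_h by auto
lemma sig_B: "i \<in> hB \<Longrightarrow> i - h \<in> hA" unfolding hA_def hB_def using K_h by auto
lemma sig_inv: "sig (sig i) = i"
proof -
  have d: "\<And>x. x \<in> hA \<Longrightarrow> x \<notin> hB" using AB_dis by auto
  show ?thesis
  proof (cases "i \<in> hA")
    case True thus ?thesis unfolding sig_def using sig_A[OF True] d[of "i+h"] by (auto dest: d)
  next
    case False
    show ?thesis
    proof (cases "i \<in> hB")
      case True
      have "i \<ge> h" using True unfolding hB_def by auto
      thus ?thesis unfolding sig_def using False True sig_B[OF True] by auto
    next
      case F2: False thus ?thesis unfolding sig_def using False by auto
    qed
  qed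
qed

lemma sig_mem: "sig x \<in> hA \<longleftrightarrow> x \<in> hB" "sig x \<in> hB \<longleftrightarrow> x \<in> hA"
proof -
  have d: "\<And>x. x \<in> hA \<Longrightarrow> x \<notin> hB" using AB_dis by auto
  have "(sig x \<in> hA \<longleftrightarrow> x \<in> hB) \<and> (sig x \<in> hB \<longleftrightarrow> x \<in> hA)"
  proof (cases "x \<in> hA")
    case True thus ?thesis unfolding sig_def using sig_A[OF True] d by auto
  next
    case False
    show ?thesis
    proof (cases "x \<in> hB")
      case True thus ?thesis unfolding sig_def using False sig_B[OF True] d by auto
    next
      case F2: False thus ?thesis unfolding sig_def using False by auto
    qed
  qed
  thus "sig x \<in> hA \<longleftrightarrow> x \<in> hB" "sig x \<in> hB \<longleftrightarrow> x \<in> hA" by auto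
qed

lemma sig_K: "i \<in> {1..K} \<Longrightarrow> sig i \<in> {1..K}"
  using sig_mem AB_un by blast

lemma cnt_tau: assumes "(a \<in> hA \<and> c \<in> hA) \<or> (a \<in> hB \<and> c \<in> hB)" shows "cnt (tau a c k) = cnt k"
proof (rule inv_cnt)
  show "\<And>i. tau a c (tau a c i) = i" by (rule tau_props)
  show "\<And>i. i \<in> {1..K} \<Longrightarrow> tau a c i \<in> {1..K}" using assms AB_un unfolding tau_def by auto
  show "\<And>T. wt (tau a c ` T) = wt T"
  proof (rule wt_perm[where X = hA and Y = hB])
    show "\<And>x. (tau a c x \<in> hA) = (x \<in> hA)" using assms AB_dis unfolding tau_def by auto
    show "\<And>x. (tau a c x \<in> hB) = (x \<in> hB)" using assms AB_dis unfolding tau_def by auto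
  qed (auto simp: tau_props)
qed

lemma cnt_sig: "cnt (sig k) = cnt k"
proof (rule inv_cnt)
  show "\<And>i. sig (sig i) = i" by (rule sig_inv)
  show "\<And>i. i \<in> {1..K} \<Longrightarrow> sig i \<in> {1..K}" by (rule sig_K)
  show "\<And>T. wt (sig ` T) = wt T"
  proof (rule wt_perm[where X = hB and Y = hA])
    show "inj sig" by (metis sig_inv injI)
  qed (auto simp: sig_mem)
qed

lemma one_A: "1 \<in> hA" unfolding hA_def using K_h by auto

lemma cnt_eq: assumes "k \<in> {1..K}" shows "cnt k = cnt 1"
proof (cases "k \<in> hA")
  case True
  have "cnt (tau 1 k 1) = cnt 1" using True one_A by (intro cnt_tau) auto
  thus ?thesis unfolding tau_def by (cases "k = 1") auto
next
  case False
  hence kB: "k \<in> hB" using assms AB_un by auto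
  hence sA: "sig k \<in> hA" using sig_mem by auto
  have "cnt (tau 1 (sig k) 1) = cnt 1" using sA one_A by (intro cnt_tau) auto
  hence "cnt (sig k) = cnt 1" unfolding tau_def by (cases "sig k = 1") auto
  thus ?thesis using cnt_sig by simp
qed

lemma cnt_sum: "(\<Sum>k\<in>{1..K}. cnt k) = t * card Pc"
proof -
  have "(\<Sum>k\<in>{1..K}. cnt k) = (\<Sum>k\<in>{1..K}. \<Sum>x\<in>Pc. if k \<in> fst x then 1 else 0)"
    unfolding cnt_def using fin_Pc by (simp add: sum.If_cases Int_def)
  also have "\<dots> = (\<Sum>x\<in>Pc. \<Sum>k\<in>{1..K}. if k \<in> fst x then 1 else 0)" by (rule sum.swap)
  also have "\<dots> = (\<Sum>x\<in>Pc. t)"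
  proof (rule sum.cong)
    fix x assume "x \<in> Pc"
    hence x: "fst x \<subseteq> {1..K}" "card (fst x) = t" unfolding Pc_def Ts_def by auto
    hence "{1..K} \<inter> {k. k \<in> fst x} = fst x" by auto
    thus "(\<Sum>k\<in>{1..K}. if k \<in> fst x then 1 else 0) = t" using x by (simp add: sum.If_cases)
  qed simp
  finally show ?thesis by simp
qed

lemma cnt_reg: assumes "k \<in> {1..K}" shows "K * cnt k = t * card Pc"
proof -
  have "(\<Sum>k\<in>{1..K}. cnt k) = (\<Sum>k\<in>{1..K}. cnt 1)"
    by (rule sum.cong[OF refl]) (rule cnt_eq)
  hence "t * card Pc = K * cnt 1" using cnt_sum by simp
  thus ?thesis using cnt_eq[OF assms] by simp
qed

lemma Pc_le: "2 * card Pc \<le> t * (K choose t)"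
proof -
  have "2 * card Pc = (\<Sum>T\<in>Ts t. 2 * wt T)" unfolding card_Pc by (simp add: sum_distrib_left)
  also have "\<dots> \<le> (\<Sum>T\<in>Ts t. t)"
  proof (rule sum_mono)
    fix T assume "T \<in> Ts t"
    hence "T \<subseteq> {1..K}" "card T = t" unfolding Ts_def by auto
    hence "card (T \<inter> hA) + card (T \<inter> hB) = t" using card_split by simp
    thus "2 * wt T \<le> t" unfolding wt_def by simp
  qed
  also have "\<dots> = t * card (Ts t)" by simp
  also have "card (Ts t) = K choose t" unfolding Ts_def using n_subsets[of "{1..K}" t] by simp
  finally show ?thesis by simp
qed

lemma Pc_pos: "card Pc \<ge> 1"
proof -
  define q where "q = t div 2"
  have q: "1 \<le> q" "q \<le> h" "t = 2 * q" using t2 tK et K_h unfolding q_def by auto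
  define T0 where "T0 = {1..q} \<union> {h+1..h+q}"
  have i1: "T0 \<inter> hA = {1..q}" unfolding T0_def hA_def using q by auto
  have i2: "T0 \<inter> hB = {h+1..h+q}" unfolding T0_def hB_def using q K_h by auto
  have sub: "T0 \<subseteq> {1..K}" unfolding T0_def using q K_h by auto
  have "card T0 = t" using card_split[OF sub] i1 i2 q by simp
  hence "T0 \<in> Ts t" using sub unfolding Ts_def by auto
  moreover have "wt T0 = q" unfolding wt_def i1 i2 by simp
  ultimately have "(T0, 0) \<in> Pc" unfolding Pc_def using q by auto
  hence "Pc \<noteq> {}" by auto
  thus ?thesis using fin_Pc by (simp add: Suc_le_eq card_gt_0_iff)
qed

definition Zc where "Zc N k = {(n,j). n \<in> {1..N} \<and> j \<in> {1..FF} \<and> k \<in> fst (pl ! (j-1))}"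
definition blk where "blk b s S d V = map (\<lambda>p. odd (card {k\<in>S-{s}. V (d k, pnum (S-{k}, rk s (side S \<inter> S - {k}))) ! p})) [0..<b]"
definition enc where "enc b s d V = map (\<lambda>S. blk b s S d V) (sl s)"
definition dec where "dec b k d V R j = (if k \<in> fst (pl ! (j-1)) then V (d k, j) else
   (let S = insert k (fst (pl ! (j-1))); Y = side S \<inter> S - {k}; s = (THE s. s \<in> Y \<and> rk s Y = snd (pl ! (j-1)));
        bl = R s ! (THE q. q < length (sl s) \<and> sl s ! q = S) in
    map (\<lambda>p. (bl ! p) \<noteq> odd (card {k' \<in> S - {s} - {k}. V (d k', pnum (S - {k'}, rk s (side S \<inter> S - {k'}))) ! p})) [0..<b]))"

lemma Zc_card: "card (Zc N k) = N * cnt k"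
proof -
  define J where "J = {j\<in>{1..FF}. k \<in> fst (pl ! (j-1))}"
  have Z: "Zc N k = {1..N} \<times> J" unfolding Zc_def J_def by auto
  have "bij_betw (\<lambda>j. pl ! (j-1)) J {x\<in>Pc. k \<in> fst x}"
  proof (rule bij_betw_byWitness[where f' = "pnum"])
    show "\<forall>a\<in>J. pnum (pl ! (a - 1)) = a" unfolding J_def using pnum_inv by auto
    show "\<forall>a'\<in>{x \<in> Pc. k \<in> fst x}. pl ! (pnum a' - 1) = a'" using pnum_props by auto
    show "(\<lambda>j. pl ! (j - 1)) ` J \<subseteq> {x \<in> Pc. k \<in> fst x}" unfolding J_def using pl_in by auto
    show "pnum ` {x \<in> Pc. k \<in> fst x} \<subseteq> J" unfolding J_def using pnum_props by auto
  qed
  hence "card J = cnt k" unfolding cnt_def by (simp add: bij_betw_same_card)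
  thus ?thesis unfolding Z by (simp add: card_cartesian_product)
qed

lemma Zc_mem: assumes "n \<in> {1..N}" "x \<in> Pc" "u \<in> fst x" shows "(n, pnum x) \<in> Zc N u"
  unfolding Zc_def using assms pnum_props by auto

lemma Zc_sub: "Zc N k \<subseteq> {1..N} \<times> {1..FF}" unfolding Zc_def by auto

lemma xvalid: assumes S: "S \<in> Ts (Suc t)" and s: "s \<in> side S \<inter> S" and k': "k' \<in> S" "k' \<noteq> s"
  shows "(S - {k'}, rk s (side S \<inter> S - {k'})) \<in> Pc" "s \<in> S - {k'}"
proof -
  have S1: "S \<subseteq> {1..K}" "card S = Suc t" using S unfolding Ts_def by auto
  have fS: "finite S" using S1 finite_subset by blast
  have od: "odd (card S)" using S1 et by simp
  have "S - {k'} \<in> Ts t" using S1 k' fS unfolding Ts_def by auto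
  moreover have "rk s (side S \<inter> S - {k'}) < wt (S - {k'})"
    using C1[OF S1(1) od k'(1)] rk_less[of "side S \<inter> S - {k'}" s] fS s k' by auto
  ultimately show "(S - {k'}, rk s (side S \<inter> S - {k'})) \<in> Pc" unfolding Pc_def by auto
  show "s \<in> S - {k'}" using s k' by auto
qed

lemma card_ins_odd: assumes "finite A" "k \<in> A"
  shows "odd (card {x\<in>A. P x}) = (odd (card {x\<in>A - {k}. P x}) \<noteq> P k)"
proof (cases "P k")
  case True
  hence "{x\<in>A. P x} = insert k {x\<in>A - {k}. P x}" using assms by auto
  moreover have "finite {x\<in>A - {k}. P x}" using assms by auto
  ultimately show ?thesis using True by simp
next
  case False
  hence "{x\<in>A. P x} = {x\<in>A - {k}. P x}" using assms by auto
  thus ?thesis using False by simp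
qed

lemma scheme_ok:
  assumes "N \<ge> 1" and M: "real K * M = real t * real N"
  shows "d2d_scheme N K M FF b (Zc N) (\<lambda>k d. length (sl k)) (enc b) (dec b)"
  unfolding d2d_scheme_def
proof (intro conjI ballI)
  fix k assume k: "k \<in> {1..K}"
  show "Zc N k \<subseteq> {1..N} \<times> {1..FF}" by (rule Zc_sub)
  have "K * cnt k = t * FF" using cnt_reg[OF k] FF_card by simp
  hence e1: "real K * real (cnt k) = real t * real FF" by (metis of_nat_mult)
  have "real K * real (N * cnt k) = real N * (real K * real (cnt k))" by simp
  also have "\<dots> = (real t * real N) * real FF" unfolding e1 by (simp only: mult_ac)
  also have "\<dots> = real K * (M * real FF)" unfolding M[symmetric] by (simp only: mult_ac)
  finally have "real K * real (N * cnt k) = real K * (M * real FF)" .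
  moreover have "real K > 0" using K_h by simp
  ultimately have "real (N * cnt k) = M * real FF" by simp
  thus "real (card (Zc N k)) \<le> M * real FF" using Zc_card by simp
next
  fix d W k assume d: "d \<in> demands N K" and W: "W \<in> contents N FF b" and k: "k \<in> {1..K}"
  show "length (enc b k d (restrict W (Zc N k))) = length (sl k)" unfolding enc_def by simp
next
  fix d W k x assume "d \<in> demands N K" "W \<in> contents N FF b" "k \<in> {1..K}"
    and x: "x \<in> set (enc b k d (restrict W (Zc N k)))"
  show "length x = b" using x unfolding enc_def blk_def by auto
next
  fix d W k j assume d: "d \<in> demands N K" and W: "W \<in> contents N FF b" and k: "k \<in> {1..K}" and j: "j \<in> {1..FF}"
  have dK: "\<And>u. u \<in> {1..K} \<Longrightarrow> d u \<in> {1..N}" using d unfolding demands_def by auto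
  have Wl: "length (W (d k, j)) = b" using W dK[OF k] j unfolding contents_def by auto
  define V where "V = (\<lambda>u. restrict W (Zc N u))"
  define R where "R = (\<lambda>k'. if k' \<in> {1..K} - {k} then enc b k' d (V k') else [])"
  obtain T i where Ti: "pl ! (j-1) = (T, i)" by (cases "pl ! (j-1)") blast
  have TiP: "(T, i) \<in> Pc" using pl_in[OF j] Ti by simp
  hence T: "T \<in> Ts t" "i < wt T" unfolding Pc_def by auto
  have pj: "pnum (T, i) = j" using pnum_inv[OF j] Ti by simp
  have main: "dec b k d (V k) R j = W (d k, j)"
  proof (cases "k \<in> T")
    case True
    have inZ: "(d k, j) \<in> Zc N k" unfolding Zc_def using dK[OF k] j Ti True by auto
    have kin: "k \<in> fst (pl ! (j-1))" using Ti True by simp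
    have "dec b k d (V k) R j = V k (d k, j)" unfolding dec_def using kin by (rule if_P)
    also have "\<dots> = W (d k, j)" unfolding V_def using inZ by simp
    finally show ?thesis .
  next
    case False
    define S where "S = insert k T"
    define Y where "Y = side S \<inter> S - {k}"
    have TK: "T \<subseteq> {1..K}" "card T = t" using T unfolding Ts_def by auto
    have fT: "finite T" using TK finite_subset by blast
    have S: "S \<in> Ts (Suc t)" unfolding S_def Ts_def using TK k False fT by auto
    have SK: "S \<subseteq> {1..K}" "card S = Suc t" using S unfolding Ts_def by auto
    have fS: "finite S" using SK finite_subset by blast
    have kS: "k \<in> S" unfolding S_def by simp
    have STk: "S - {k} = T" unfolding S_def using False by auto
    have cY: "card Y = wt T" unfolding Y_def using C1[OF SK(1) _ kS] SK(2) et STk by simp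
    have fY: "finite Y" unfolding Y_def using fS by auto
    have ex1: "\<exists>!s. s \<in> Y \<and> rk s Y = i" using rk_surj[OF fY] cY T(2) by simp
    define s where "s = (THE s. s \<in> Y \<and> rk s Y = i)"
    have s: "s \<in> Y" "rk s Y = i" using theI'[OF ex1] unfolding s_def by auto
    have sS: "s \<in> side S \<inter> S" "s \<noteq> k" using s(1) unfolding Y_def by auto
    have sK: "s \<in> {1..K} - {k}" using sS SK by auto
    have "S \<in> snd_sets s" unfolding snd_sets_def using S sS by auto
    hence Sin: "S \<in> set (sl s)" using sl_props by simp
    have ex2: "\<exists>!q. q < length (sl s) \<and> sl s ! q = S" using distinct_Ex1[OF sl_props(2) Sin] .
    define q where "q = (THE q. q < length (sl s) \<and> sl s ! q = S)"
    have q: "q < length (sl s)" "sl s ! q = S" using theI'[OF ex2] unfolding q_def by auto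
    have Rs: "R s ! q = blk b s S d (V s)" unfolding R_def enc_def using sK q by simp
    define x where "x = (\<lambda>k'. (S - {k'}, rk s (side S \<inter> S - {k'})))"
    have xP: "\<And>k'. k' \<in> S \<Longrightarrow> k' \<noteq> s \<Longrightarrow> x k' \<in> Pc" unfolding x_def using xvalid[OF S sS(1)] by blast
    have Wx: "\<And>u k'. k' \<in> S \<Longrightarrow> k' \<noteq> s \<Longrightarrow> u \<in> S - {k'} \<Longrightarrow> V u (d k', pnum (x k')) = W (d k', pnum (x k'))"
    proof -
      fix u k' assume a: "k' \<in> S" "k' \<noteq> s" "u \<in> S - {k'}"
      have "(d k', pnum (x k')) \<in> Zc N u" using Zc_mem[OF dK xP[OF a(1,2)]] a SK unfolding x_def by auto
      thus "V u (d k', pnum (x k')) = W (d k', pnum (x k'))" unfolding V_def by simp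
    qed
    have xk: "x k = (T, i)" unfolding x_def using STk s(2) unfolding Y_def by simp
    define P where "P = (\<lambda>p k'. W (d k', pnum (x k')) ! p)"
    have kn: "\<not> k \<in> fst (pl ! (j-1))" using Ti False by simp
    have dec_eq: "dec b k d (V k) R j = map (\<lambda>p. (R s ! q ! p) \<noteq> odd (card {k' \<in> S - {s} - {k}. V k (d k', pnum (S - {k'}, rk s (side S \<inter> S - {k'}))) ! p})) [0..<b]"
      unfolding dec_def if_not_P[OF kn] Let_def unfolding Ti fst_conv snd_conv
      unfolding S_def[symmetric] Y_def[symmetric] s_def[symmetric] q_def[symmetric] ..
    also have "\<dots> = map (\<lambda>p. P p k) [0..<b]"
    proof (rule map_cong[OF refl])
      fix p assume p: "p \<in> set [0..<b]"
      have b1: "R s ! q ! p = odd (card {k'\<in>S-{s}. P p k'})"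
      proof -
        have "R s ! q ! p = odd (card {k'\<in>S-{s}. V s (d k', pnum (x k')) ! p})"
          unfolding Rs blk_def x_def using p by simp
        also have "{k'\<in>S-{s}. V s (d k', pnum (x k')) ! p} = {k'\<in>S-{s}. P p k'}"
          unfolding P_def using Wx sS by auto
        finally show ?thesis .
      qed
      have b2: "{k' \<in> S - {s} - {k}. V k (d k', pnum (S - {k'}, rk s (side S \<inter> S - {k'}))) ! p} = {k' \<in> S - {s} - {k}. P p k'}"
        unfolding P_def using Wx[unfolded x_def] kS unfolding x_def by auto
      have "odd (card {k'\<in>S-{s}. P p k'}) = (odd (card {k'\<in>S-{s}-{k}. P p k'}) \<noteq> P p k)"
        using card_ins_odd[of "S - {s}" k "P p"] fS kS sS(2) by simp
      thus "(R s ! q ! p \<noteq> odd (card {k' \<in> S - {s} - {k}. V k (d k', pnum (S - {k'}, rk s (side S \<inter> S - {k'}))) ! p})) = P p k"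
        unfolding b1 b2 by blast
    qed
    also have "\<dots> = W (d k, j)"
    proof -
      have "map (\<lambda>p. P p k) [0..<b] = map (\<lambda>p. W (d k, j) ! p) [0..<length (W (d k, j))]"
        unfolding P_def xk pj Wl by simp
      thus ?thesis by (simp add: map_nth)
    qed
    finally show ?thesis .
  qed
  thus "dec b k d (restrict W (Zc N k)) (\<lambda>k'. if k' \<in> {1..K} - {k} then enc b k' d (restrict W (Zc N k')) else []) j = W (d k, j)"
    unfolding V_def R_def .
qed

lemma rate_ok: assumes "N \<ge> 1"
  shows "d2d_rate N K FF (\<lambda>k d. length (sl k)) = real K / real t - 1"
proof -
  have ne: "demands N K \<noteq> {}"
  proof -
    have "(\<lambda>u. if u \<in> {1..K} then 1 else undefined) \<in> demands N K"
      unfolding demands_def using assms by auto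
    thus ?thesis by blast
  qed
  have sl: "(\<Sum>k\<in>{1..K}. length (sl k)) = (\<Sum>S\<in>Ts (Suc t). card (side S \<inter> S))"
  proof -
    have "\<And>k. length (sl k) = card (snd_sets k)" using distinct_card[OF sl_props(2)] sl_props(1) by metis
    thus ?thesis using send_count by simp
  qed
  have r: "real t * real (\<Sum>k\<in>{1..K}. length (sl k)) = (real K - real t) * real FF"
    using rate_count tK unfolding sl FF_card by (metis of_nat_diff of_nat_mult)
  have F0: "real FF > 0" using Pc_pos FF_card by simp
  have t0: "real t > 0" using t2 by simp
  have img: "(\<lambda>d. real (\<Sum>k\<in>{1..K}. length (sl k)) / real FF) ` demands N K = {real (\<Sum>k\<in>{1..K}. length (sl k)) / real FF}"
    using ne by auto
  have "real (\<Sum>k\<in>{1..K}. length (sl k)) / real FF = real K / real t - 1"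
    using r F0 t0 by (simp add: field_simps)
  thus ?thesis unfolding d2d_rate_def img by simp
qed

end

theorem theorem2:
  fixes N K t :: nat and M :: real
  assumes "N \<ge> 1" and "K \<ge> 2" and "0 < M" and "M \<le> real N"
    and "real t = real K * M / real N" and "t > 0"
    and "even K" and "even t" and "2 \<le> t" and "t \<le> K"
  shows "\<exists>F::nat. F \<ge> 1 \<and> real F \<le> (1/2) * real (t * (K choose t)) \<and>
           d2d_achievable N K M F (real N / M - 1)"
proof -
  interpret s: sch K t using assms by unfold_locales auto
  have N0: "real N > 0" using assms(1) by simp
  have M: "real K * M = real t * real N" using assms(5) N0 by (simp add: field_simps)
  have t0: "real t > 0" using assms(6) by simp
  have rate: "real N / M - 1 = real K / real t - 1"
    using M assms(3) t0 N0 by (simp add: field_simps)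
  have F1: "s.FF \<ge> 1" using s.Pc_pos s.FF_card by simp
  have F2: "real s.FF \<le> (1/2) * real (t * (K choose t))"
  proof -
    have "2 * s.FF \<le> t * (K choose t)" using s.Pc_le s.FF_card by simp
    hence "real (2 * s.FF) \<le> real (t * (K choose t))" by (simp only: of_nat_le_iff)
    thus ?thesis by simp
  qed
  have "d2d_achievable N K M s.FF (real N / M - 1)"
    unfolding d2d_achievable_def
  proof (intro allI impI)
    fix b :: nat assume "1 \<le> b"
    have "d2d_scheme N K M s.FF b (s.Zc N) (\<lambda>k d. length (s.sl k)) (s.enc b) (s.dec b)"
      using s.scheme_ok[OF assms(1) M] .
    moreover have "d2d_rate N K s.FF (\<lambda>k d. length (s.sl k)) = real N / M - 1"
      using s.rate_ok[OF assms(1)] rate by simp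
    ultimately show "\<exists>Z l enc dec. d2d_scheme N K M s.FF b Z l enc dec \<and> d2d_rate N K s.FF l = real N / M - 1"
      by blast
  qed
  thus ?thesis using F1 F2 by blast
qed

end
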